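(* Let $\mathcal{H}$ be a Hilbert space of finite or countably infinite dimension, let $\Omega$ be a finite set and let $\mathcal{I}=(\mathcal{I}_\omega)_{\omega\in\Omega}$ be an instrument on $\Omega$. For $n\in\mathbb{N}$ let $\mathsf{A}^\mathcal{I}_n$ be the observable on $\Omega^n$ given by $\mathsf{A}^\mathcal{I}_n(\omega_1,\ldots,\omega_n)=\mathcal{I}_{\omega_1}\circ\cdots\circ\mathcal{I}_{\omega_n}(\mathbb{1})$. If $\mathsf{A}^\mathcal{I}_n\simeq\mathsf{A}^\mathcal{I}_{n+1}$ for some $n\in\mathbb{N}$, then $\mathsf{A}^\mathcal{I}_n\simeq\mathsf{A}^\mathcal{I}_m$ for all $m\geq n$.
   Context: An observable with finite outcome set $\Omega_\mathsf{A}$ is a map $\omega\mapsto\mathsf{A}(\omega)$ into bounded operators on $\mathcal{H}$ with each $\mathsf{A}(\omega)\geq 0$ and $\sum_\omega\mathsf{A}(\omega)=\mathbb{1}$. An instrument on a finite set $\Omega$ (Heisenberg picture) is a family $(\mathcal{I}_\omega)_{\omega\in\Omega}$ of normal completely positive maps on the bounded operators $\mathcal{L}(\mathcal{H})$ with $\sum_\omega\mathcal{I}_\omega(\mathbb{1})=\mathbb{1}$; $\mathcal{I}_{\omega}\circ\mathcal{I}_{\omega'}$ denotes functional composition. For observables $\mathsf{A},\mathsf{B}$ with finite outcome sets, $\mathsf{A}\preceq\mathsf{B}$ means there is a Markov kernel $\kappa:\Omega_\mathsf{A}\times\Omega_\mathsf{B}\to[0,1]$ (i.e. $\sum_\omega\kappa(\omega|\omega')=1$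 for all $\omega'$) with $\mathsf{A}(\omega)=\sum_{\omega'}\kappa(\omega|\omega')\mathsf{B}(\omega')$ for all $\omega$; $\mathsf{A}\simeq\mathsf{B}$ means $\mathsf{A}\preceq\mathsf{B}$ and $\mathsf{B}\preceq\mathsf{A}$. *)

theory Defs
  imports "HOL-Analysis.Analysis" "HOL-Library.Function_Algebras"
begin

text \<open>
  A Hilbert space of finite or countably infinite dimension is (up to unitary
  equivalence) the space l2('i) of square-summable complex functions on a countable
  index type 'i (finite 'i = finite dimension). A bounded operator T on l2('i) is
  represented by its matrix (i,j) |-> <e_i, T e_j>; this is a bijection between
  bounded operators and the matrices satisfying bounded_op below, under which sums,
  scalar multiples and the identity correspond to the pointwise ones.
\<close>

type_synonym 'i vec = "'i \<Rightarrow> complex"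
type_synonym 'i bop = "'i \<Rightarrow> 'i \<Rightarrow> complex"

definition l2 :: "('i vec) set" where
  "l2 = {x. (\<lambda>i. (cmod (x i))^2) summable_on UNIV}"

definition l2norm :: "'i vec \<Rightarrow> real" where
  "l2norm x = sqrt (infsum (\<lambda>i. (cmod (x i))^2) UNIV)"

definition cinner_l2 :: "'i vec \<Rightarrow> 'i vec \<Rightarrow> complex" where
  "cinner_l2 x y = infsum (\<lambda>i. cnj (x i) * y i) UNIV"

definition apply_op :: "'i bop \<Rightarrow> 'i vec \<Rightarrow> 'i vec" where
  "apply_op M x = (\<lambda>i. infsum (\<lambda>j. M i j * x j) UNIV)"

definition bounded_op :: "'i bop \<Rightarrow> bool" where
  "bounded_op M \<longleftrightarrow> (\<exists>C. \<forall>x\<in>l2. (\<forall>i. (\<lambda>j. M i j * x j) summable_on UNIV)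
      \<and> apply_op M x \<in> l2 \<and> l2norm (apply_op M x) \<le> C * l2norm x)"

definition cnonneg :: "complex \<Rightarrow> bool" where
  "cnonneg z \<longleftrightarrow> Im z = 0 \<and> 0 \<le> Re z"

definition positive_op :: "'i bop \<Rightarrow> bool" where
  "positive_op M \<longleftrightarrow> bounded_op M \<and> (\<forall>x\<in>l2. cnonneg (cinner_l2 x (apply_op M x)))"

definition id_op :: "'i bop" where
  "id_op = (\<lambda>i j. if i = j then 1 else 0)"

definition op_le :: "'i bop \<Rightarrow> 'i bop \<Rightarrow> bool" where
  "op_le M N \<longleftrightarrow> bounded_op M \<and> bounded_op N \<and> positive_op (\<lambda>i j. N i j - M i j)"

text \<open>Maps on L(H), given as maps on matrices (only their values on bounded operators matter).\<close>
definition linear_map :: "('i bop \<Rightarrow> 'i bop) \<Rightarrow> bool" where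
  "linear_map \<Phi> \<longleftrightarrow> (\<forall>M. bounded_op M \<longrightarrow> bounded_op (\<Phi> M))
     \<and> (\<forall>M N. bounded_op M \<longrightarrow> bounded_op N \<longrightarrow>
            \<Phi> (\<lambda>i j. M i j + N i j) = (\<lambda>i j. \<Phi> M i j + \<Phi> N i j))
     \<and> (\<forall>c M. bounded_op M \<longrightarrow> \<Phi> (\<lambda>i j. c * M i j) = (\<lambda>i j. c * \<Phi> M i j))"

definition block_positive :: "nat \<Rightarrow> (nat \<Rightarrow> nat \<Rightarrow> 'i bop) \<Rightarrow> bool" where
  "block_positive n T \<longleftrightarrow> (\<forall>k<n. \<forall>l<n. bounded_op (T k l)) \<and>
     (\<forall>x. (\<forall>k<n. x k \<in> l2) \<longrightarrow>
        cnonneg (\<Sum>k<n. \<Sum>l<n. cinner_l2 (x k) (apply_op (T k l) (x l))))"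

definition completely_positive :: "('i bop \<Rightarrow> 'i bop) \<Rightarrow> bool" where
  "completely_positive \<Phi> \<longleftrightarrow> linear_map \<Phi> \<and>
     (\<forall>n T. block_positive n T \<longrightarrow> block_positive n (\<lambda>k l. \<Phi> (T k l)))"

definition is_lub_op :: "'i bop set \<Rightarrow> 'i bop \<Rightarrow> bool" where
  "is_lub_op S T \<longleftrightarrow> (\<forall>s\<in>S. op_le s T) \<and> (\<forall>U. (\<forall>s\<in>S. op_le s U) \<longrightarrow> op_le T U)"

text \<open>Normal (for positive maps): preserves suprema of bounded increasing nets of positive
  operators; an increasing net is represented by its (upward directed) range.\<close>
definition normal_map :: "('i bop \<Rightarrow> 'i bop) \<Rightarrow> bool" where
  "normal_map \<Phi> \<longleftrightarrow> (\<forall>S T. S \<noteq> {} \<longrightarrow> (\<forall>s\<in>S. positive_op s) \<longrightarrow>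
      (\<forall>a\<in>S. \<forall>b\<in>S. \<exists>c\<in>S. op_le a c \<and> op_le b c) \<longrightarrow>
      is_lub_op S T \<longrightarrow> is_lub_op (\<Phi> ` S) (\<Phi> T))"

definition instrument :: "'w set \<Rightarrow> ('w \<Rightarrow> 'i bop \<Rightarrow> 'i bop) \<Rightarrow> bool" where
  "instrument \<Omega> \<I> \<longleftrightarrow> finite \<Omega> \<and>
     (\<forall>\<omega>\<in>\<Omega>. completely_positive (\<I> \<omega>) \<and> normal_map (\<I> \<omega>)) \<and>
     (\<Sum>\<omega>\<in>\<Omega>. \<I> \<omega> id_op) = id_op"

definition observable :: "'w set \<Rightarrow> ('w \<Rightarrow> 'i bop) \<Rightarrow> bool" where
  "observable \<Omega> A \<longleftrightarrow> finite \<Omega> \<and> (\<forall>\<omega>\<in>\<Omega>. positive_op (A \<omega>)) \<and> (\<Sum>\<omega>\<in>\<Omega>. A \<omega>) = id_op"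

definition post_proc :: "'a set \<Rightarrow> ('a \<Rightarrow> 'i bop) \<Rightarrow> 'b set \<Rightarrow> ('b \<Rightarrow> 'i bop) \<Rightarrow> bool" where
  "post_proc \<Omega>A A \<Omega>B B \<longleftrightarrow> (\<exists>\<kappa> :: 'a \<Rightarrow> 'b \<Rightarrow> real.
     (\<forall>a\<in>\<Omega>A. \<forall>b\<in>\<Omega>B. 0 \<le> \<kappa> a b \<and> \<kappa> a b \<le> 1) \<and>
     (\<forall>b\<in>\<Omega>B. (\<Sum>a\<in>\<Omega>A. \<kappa> a b) = 1) \<and>
     (\<forall>a\<in>\<Omega>A. A a = (\<Sum>b\<in>\<Omega>B. (\<lambda>i j. complex_of_real (\<kappa> a b) * B b i j))))"

definition obs_equiv :: "'a set \<Rightarrow> ('a \<Rightarrow> 'i bop) \<Rightarrow> 'b set \<Rightarrow> ('b \<Rightarrow> 'i bop) \<Rightarrow> bool" where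
  "obs_equiv \<Omega>A A \<Omega>B B \<longleftrightarrow> post_proc \<Omega>A A \<Omega>B B \<and> post_proc \<Omega>B B \<Omega>A A"

text \<open>Omega^n as lists of length n, and A_n(w1..wn) = I_w1 o ... o I_wn (1).\<close>
definition outcomes :: "'w set \<Rightarrow> nat \<Rightarrow> 'w list set" where
  "outcomes \<Omega> n = {ws. length ws = n \<and> set ws \<subseteq> \<Omega>}"

definition seq_obs :: "('w \<Rightarrow> 'i bop \<Rightarrow> 'i bop) \<Rightarrow> 'w list \<Rightarrow> 'i bop" where
  "seq_obs \<I> ws = foldr (\<lambda>\<omega> M. \<I> \<omega> M) ws id_op"

end

theory Submission
  imports Defs
begin

lemma sum_apply2: "(sum f A) i j = (\<Sum>a\<in>A. f a i j)"
  by (induction A rule: infinite_finite_induct) auto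

lemma bounded_zero: "bounded_op (\<lambda>i j. 0)"
  unfolding bounded_op_def
  by (rule exI[of _ 0]) (auto simp: apply_op_def l2_def l2norm_def)

lemma single_infsum: "infsum (\<lambda>j. if j = i then (c::complex) else 0) UNIV = c"
proof -
  have "infsum (\<lambda>j. if j = i then (c::complex) else 0) UNIV = infsum (\<lambda>j. if j = i then (c::complex) else 0) {i}"
    by (rule infsum_cong_neutral) auto
  then show ?thesis by simp
qed

lemma single_summable: "(\<lambda>j. if j = i then (c::complex) else 0) summable_on UNIV"
proof -
  have "(\<lambda>j. if j = i then (c::complex) else 0) summable_on UNIV \<longleftrightarrow> (\<lambda>j. if j = i then (c::complex) else 0) summable_on {i}"
    by (rule summable_on_cong_neutral) auto
  then show ?thesis by simp
qed

lemma bounded_id: "bounded_op id_op"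
proof -
  have eq: "(\<lambda>j. id_op i j * x j) = (\<lambda>j. if j = i then x i else 0)" for i and x :: "'a vec"
    by (auto simp: id_op_def)
  have ap: "apply_op id_op x = x" for x :: "'a vec"
    unfolding apply_op_def eq single_infsum ..
  show ?thesis unfolding bounded_op_def
    by (intro exI[of _ 1]) (auto simp: ap eq single_summable)
qed

lemma bounded_scale:
  assumes "bounded_op M"
  shows "bounded_op (\<lambda>i j. c * M i j)"
proof -
  obtain C where C: "\<forall>x\<in>l2. (\<forall>i. (\<lambda>j. M i j * x j) summable_on UNIV)
      \<and> apply_op M x \<in> l2 \<and> l2norm (apply_op M x) \<le> C * l2norm x"
    using assms unfolding bounded_op_def by blast
  show ?thesis unfolding bounded_op_def
  proof (intro exI[of _ "cmod c * C"] ballI conjI allI)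
    fix x :: "'a vec" assume x: "x \<in> l2"
    fix i
    have s: "(\<lambda>j. M i j * x j) summable_on UNIV" using C x by blast
    show "(\<lambda>j. c * M i j * x j) summable_on UNIV"
      using summable_on_cmult_right[OF s, of c] by (simp add: mult.assoc)
    have ap: "apply_op (\<lambda>i j. c * M i j) x = (\<lambda>i. c * apply_op M x i)"
      unfolding apply_op_def
    proof
      fix i
      have s: "(\<lambda>j. M i j * x j) summable_on UNIV" using C x by blast
      show "(\<Sum>\<^sub>\<infinity>j. c * M i j * x j) = c * (\<Sum>\<^sub>\<infinity>j. M i j * x j)"
        using infsum_cmult_right[of c "\<lambda>j. M i j * x j" UNIV] s by (simp add: mult.assoc)
    qed
    have y: "apply_op M x \<in> l2" and yn: "l2norm (apply_op M x) \<le> C * l2norm x" using C x by auto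
    have sq: "(\<lambda>i. (cmod (c * apply_op M x i))^2) = (\<lambda>i. (cmod c)^2 * (cmod (apply_op M x i))^2)"
      by (simp add: norm_mult power_mult_distrib)
    show "apply_op (\<lambda>i j. c * M i j) x \<in> l2"
    proof -
      have "(\<lambda>i. (cmod c)^2 * (cmod (apply_op M x i))^2) summable_on UNIV"
        using y unfolding l2_def by (auto intro: summable_on_cmult_right)
      then show ?thesis unfolding ap l2_def sq[symmetric] by simp
    qed
    have "l2norm (apply_op (\<lambda>i j. c * M i j) x) = cmod c * l2norm (apply_op M x)"
      unfolding ap l2norm_def sq
      using y unfolding l2_def
      by (simp add: infsum_cmult_right real_sqrt_mult)
    also have "\<dots> \<le> cmod c * (C * l2norm x)"
      by (rule mult_left_mono[OF yn]) simp
    finally show "l2norm (apply_op (\<lambda>i j. c * M i j) x) \<le> cmod c * C * l2norm x"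
      by (simp add: mult.assoc)
  qed
qed

lemma l2norm_nonneg: "l2norm x \<ge> 0"
  unfolding l2norm_def by (simp add: infsum_nonneg)

lemma bounded_add:
  assumes "bounded_op M" "bounded_op N"
  shows "bounded_op (\<lambda>i j. M i j + N i j)"
proof -
  obtain C where C: "\<forall>x\<in>l2. (\<forall>i. (\<lambda>j. M i j * x j) summable_on UNIV)
      \<and> apply_op M x \<in> l2 \<and> l2norm (apply_op M x) \<le> C * l2norm x"
    using assms unfolding bounded_op_def by blast
  obtain D where D: "\<forall>x\<in>l2. (\<forall>i. (\<lambda>j. N i j * x j) summable_on UNIV)
      \<and> apply_op N x \<in> l2 \<and> l2norm (apply_op N x) \<le> D * l2norm x"
    using assms unfolding bounded_op_def by blast
  show ?thesis unfolding bounded_op_def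
  proof (intro exI[of _ "sqrt (2*C^2 + 2*D^2)"] ballI conjI allI)
    fix x :: "'a vec" assume x: "x \<in> l2"
    have sM: "(\<lambda>j. M i j * x j) summable_on UNIV" for i using C x by blast
    have sN: "(\<lambda>j. N i j * x j) summable_on UNIV" for i using D x by blast
    fix i
    show "(\<lambda>j. (M i j + N i j) * x j) summable_on UNIV"
      using summable_on_add[OF sM sN, of i] by (simp add: distrib_right)
    have ap: "apply_op (\<lambda>i j. M i j + N i j) x = (\<lambda>i. apply_op M x i + apply_op N x i)"
      unfolding apply_op_def
      using infsum_add[OF sM sN] by (simp add: distrib_right)
    define y where "y = apply_op M x"
    define z where "z = apply_op N x"
    have y: "y \<in> l2" and yn: "l2norm y \<le> C * l2norm x" using C x y_def by auto
    have z: "z \<in> l2" and zn: "l2norm z \<le> D * l2norm x" using D x z_def by auto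
    have sy: "(\<lambda>i. (cmod (y i))^2) summable_on UNIV" using y l2_def by auto
    have sz: "(\<lambda>i. (cmod (z i))^2) summable_on UNIV" using z l2_def by auto
    have pt: "(cmod (y i + z i))^2 \<le> 2 * (cmod (y i))^2 + 2 * (cmod (z i))^2" for i
    proof -
      have "cmod (y i + z i) \<le> cmod (y i) + cmod (z i)" by (rule norm_triangle_ineq)
      then have "(cmod (y i + z i))^2 \<le> (cmod (y i) + cmod (z i))^2"
        by (rule power_mono) simp
      also have "\<dots> \<le> 2 * (cmod (y i))^2 + 2 * (cmod (z i))^2"
        using zero_le_power2[of "cmod (y i) - cmod (z i)"] by (simp add: power2_diff power2_sum)
      finally show ?thesis .
    qed
    have s2: "(\<lambda>i. 2 * (cmod (y i))^2 + 2 * (cmod (z i))^2) summable_on UNIV"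
      by (intro summable_on_add summable_on_cmult_right sy sz)
    have syz: "(\<lambda>i. (cmod (y i + z i))^2) summable_on UNIV"
      by (rule summable_on_comparison_test[OF s2]) (auto simp: pt)
    show "apply_op (\<lambda>i j. M i j + N i j) x \<in> l2"
      unfolding ap y_def[symmetric] z_def[symmetric] l2_def using syz by simp
    have "infsum (\<lambda>i. (cmod (y i + z i))^2) UNIV \<le> infsum (\<lambda>i. 2 * (cmod (y i))^2 + 2 * (cmod (z i))^2) UNIV"
      by (rule infsum_mono[OF syz s2]) (simp add: pt)
    also have "\<dots> = 2 * (l2norm y)^2 + 2 * (l2norm z)^2"
      unfolding l2norm_def
      by (simp add: infsum_add summable_on_cmult_right sy sz infsum_cmult_right infsum_nonneg)
    also have "\<dots> \<le> 2 * (C * l2norm x)^2 + 2 * (D * l2norm x)^2"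
      using power_mono[OF yn l2norm_nonneg, of 2] power_mono[OF zn l2norm_nonneg, of 2] by simp
    also have "\<dots> = (sqrt (2*C^2 + 2*D^2) * l2norm x)^2"
      by (simp add: power_mult_distrib algebra_simps)
    finally have le: "infsum (\<lambda>i. (cmod (y i + z i))^2) UNIV \<le> (sqrt (2*C^2 + 2*D^2) * l2norm x)^2" .
    have "l2norm (\<lambda>i. y i + z i) \<le> sqrt ((sqrt (2*C^2 + 2*D^2) * l2norm x)^2)"
      unfolding l2norm_def[of "\<lambda>i. y i + z i"] by (rule real_sqrt_le_mono) (use le in simp)
    also have "\<dots> = sqrt (2*C^2 + 2*D^2) * l2norm x"
      by (simp add: l2norm_nonneg)
    finally show "l2norm (apply_op (\<lambda>i j. M i j + N i j) x) \<le> sqrt (2*C^2 + 2*D^2) * l2norm x"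
      unfolding ap y_def z_def .
  qed
qed


lemma bounded_sum:
  assumes "finite U" "\<forall>u\<in>U. bounded_op (M u)"
  shows "bounded_op (\<Sum>u\<in>U. (\<lambda>i j. c u * M u i j))"
  using assms
proof (induction U rule: finite_induct)
  case empty
  then show ?case using bounded_zero by (simp add: zero_fun_def)
next
  case (insert a F)
  then have "bounded_op (\<lambda>i j. (\<lambda>i j. c a * M a i j) i j + (\<Sum>u\<in>F. (\<lambda>i j. c u * M u i j)) i j)"
    by (intro bounded_add bounded_scale) auto
  then show ?case using insert by (simp add: plus_fun_def)
qed

lemma linear_zero:
  assumes "linear_map \<Phi>"
  shows "\<Phi> (\<lambda>i j. 0) = (\<lambda>i j. 0)"
proof -
  have "\<Phi> (\<lambda>i j. 0 * (\<lambda>i j. 0) i j) = (\<lambda>i j. 0 * \<Phi> (\<lambda>i j. 0) i j)"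
    using assms bounded_zero unfolding linear_map_def by blast
  then show ?thesis by simp
qed

lemma linear_sum:
  assumes "linear_map \<Phi>" "finite U" "\<forall>u\<in>U. bounded_op (M u)"
  shows "\<Phi> (\<Sum>u\<in>U. (\<lambda>i j. c u * M u i j)) = (\<Sum>u\<in>U. (\<lambda>i j. c u * \<Phi> (M u) i j))"
  using assms(2,3)
proof (induction U rule: finite_induct)
  case empty
  then show ?case using linear_zero[OF assms(1)] by (simp add: zero_fun_def)
next
  case (insert a F)
  have b1: "bounded_op (\<lambda>i j. c a * M a i j)" using insert by (intro bounded_scale) auto
  have b2: "bounded_op (\<Sum>u\<in>F. (\<lambda>i j. c u * M u i j))" using insert by (intro bounded_sum) auto
  have "\<Phi> (\<Sum>u\<in>insert a F. (\<lambda>i j. c u * M u i j))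
      = \<Phi> (\<lambda>i j. (\<lambda>i j. c a * M a i j) i j + (\<Sum>u\<in>F. (\<lambda>i j. c u * M u i j)) i j)"
    using insert by (simp add: plus_fun_def)
  also have "\<dots> = (\<lambda>i j. \<Phi> (\<lambda>i j. c a * M a i j) i j + \<Phi> (\<Sum>u\<in>F. (\<lambda>i j. c u * M u i j)) i j)"
    using assms(1) b1 b2 unfolding linear_map_def by blast
  also have "\<Phi> (\<lambda>i j. c a * M a i j) = (\<lambda>i j. c a * \<Phi> (M a) i j)"
    using assms(1) insert unfolding linear_map_def by auto
  finally show ?case using insert by (simp add: plus_fun_def)
qed

lemma finite_outcomes: "finite \<Omega> \<Longrightarrow> finite (outcomes \<Omega> n)"
  unfolding outcomes_def using finite_lists_length_eq[of \<Omega> n] by (simp add: conj_commute)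

lemma outcomes_Suc: "outcomes \<Omega> (Suc k) = (\<lambda>(w,ws). w # ws) ` (\<Omega> \<times> outcomes \<Omega> k)"
  unfolding outcomes_def
proof (auto simp: image_iff)
  fix xs assume "length xs = Suc k" "set xs \<subseteq> \<Omega>"
  then show "\<exists>a\<in>\<Omega>. \<exists>b. length b = k \<and> set b \<subseteq> \<Omega> \<and> xs = a # b"
    by (cases xs) auto
qed

lemma sum_outcomes_Suc:
  assumes "finite \<Omega>"
  shows "(\<Sum>a\<in>outcomes \<Omega> (Suc k). f a) = (\<Sum>w\<in>\<Omega>. \<Sum>ws\<in>outcomes \<Omega> k. f (w # ws))"
proof -
  have inj: "inj_on (\<lambda>(w,ws). w # ws) (\<Omega> \<times> outcomes \<Omega> k)"
    by (auto simp: inj_on_def)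
  have "(\<Sum>a\<in>outcomes \<Omega> (Suc k). f a) = (\<Sum>p\<in>\<Omega> \<times> outcomes \<Omega> k. f ((\<lambda>(w,ws). w # ws) p))"
    unfolding outcomes_Suc by (rule sum.reindex[OF inj, unfolded comp_def])
  also have "\<dots> = (\<Sum>w\<in>\<Omega>. \<Sum>ws\<in>outcomes \<Omega> k. f (w # ws))"
    by (simp add: sum.cartesian_product split_def)
  finally show ?thesis .
qed

lemma seq_obs_Cons: "seq_obs \<I> (w # ws) = \<I> w (seq_obs \<I> ws)"
  by (simp add: seq_obs_def)

lemma seq_obs_bounded:
  assumes "instrument \<Omega> \<I>" "set ws \<subseteq> \<Omega>"
  shows "bounded_op (seq_obs \<I> ws)"
  using assms(2)
proof (induction ws)
  case Nil
  then show ?case using bounded_id by (simp add: seq_obs_def)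
next
  case (Cons a ws)
  then have "linear_map (\<I> a)" using assms(1)
    unfolding instrument_def completely_positive_def by auto
  then show ?case using Cons by (simp add: seq_obs_Cons linear_map_def)
qed


lemma post_shift:
  assumes inst: "instrument \<Omega> \<I>"
    and pp: "post_proc (outcomes \<Omega> p) (seq_obs \<I>) (outcomes \<Omega> q) (seq_obs \<I>)"
  shows "post_proc (outcomes \<Omega> (Suc p)) (seq_obs \<I>) (outcomes \<Omega> (Suc q)) (seq_obs \<I>)"
proof -
  have fin: "finite \<Omega>" using inst instrument_def by auto
  obtain \<kappa> where k1: "\<forall>a\<in>outcomes \<Omega> p. \<forall>b\<in>outcomes \<Omega> q. 0 \<le> \<kappa> a b \<and> \<kappa> a b \<le> 1"
    and k2: "\<forall>b\<in>outcomes \<Omega> q. (\<Sum>a\<in>outcomes \<Omega> p. \<kappa> a b) = 1"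
    and k3: "\<forall>a\<in>outcomes \<Omega> p. seq_obs \<I> a = (\<Sum>b\<in>outcomes \<Omega> q. (\<lambda>i j. complex_of_real (\<kappa> a b) * seq_obs \<I> b i j))"
    using pp unfolding post_proc_def by blast
  define \<kappa>' where "\<kappa>' a b = (if hd a = hd b then \<kappa> (tl a) (tl b) else 0)" for a b :: "'a list"
  show ?thesis unfolding post_proc_def
  proof (intro exI[of _ \<kappa>'] conjI ballI)
    fix a b assume a: "a \<in> outcomes \<Omega> (Suc p)" and b: "b \<in> outcomes \<Omega> (Suc q)"
    obtain w v where "a = w # v" "v \<in> outcomes \<Omega> p" using a unfolding outcomes_Suc by auto
    moreover obtain w' u where "b = w' # u" "u \<in> outcomes \<Omega> q" using b unfolding outcomes_Suc by auto
    ultimately show "0 \<le> \<kappa>' a b" "\<kappa>' a b \<le> 1" using k1 by (auto simp: \<kappa>'_def)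
  next
    fix b assume b: "b \<in> outcomes \<Omega> (Suc q)"
    obtain w' u where bu: "b = w' # u" "u \<in> outcomes \<Omega> q" "w' \<in> \<Omega>" using b unfolding outcomes_Suc by auto
    have "(\<Sum>a\<in>outcomes \<Omega> (Suc p). \<kappa>' a b) = (\<Sum>w\<in>\<Omega>. \<Sum>v\<in>outcomes \<Omega> p. \<kappa>' (w # v) b)"
      by (rule sum_outcomes_Suc[OF fin])
    also have "\<dots> = (\<Sum>w\<in>\<Omega>. if w' = w then (\<Sum>v\<in>outcomes \<Omega> p. \<kappa> v u) else 0)"
      by (rule sum.cong) (auto simp: \<kappa>'_def bu)
    also have "\<dots> = 1" using bu k2 fin by simp
    finally show "(\<Sum>a\<in>outcomes \<Omega> (Suc p). \<kappa>' a b) = 1" .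
  next
    fix a assume a: "a \<in> outcomes \<Omega> (Suc p)"
    obtain w v where av: "a = w # v" "v \<in> outcomes \<Omega> p" "w \<in> \<Omega>" using a unfolding outcomes_Suc by auto
    have lin: "linear_map (\<I> w)" using inst av unfolding instrument_def completely_positive_def by auto
    have bnd: "\<forall>u\<in>outcomes \<Omega> q. bounded_op (seq_obs \<I> u)"
      using seq_obs_bounded[OF inst] unfolding outcomes_def by auto
    have "seq_obs \<I> a = \<I> w (\<Sum>u\<in>outcomes \<Omega> q. (\<lambda>i j. complex_of_real (\<kappa> v u) * seq_obs \<I> u i j))"
      using k3 av by (simp add: seq_obs_Cons)
    also have "\<dots> = (\<Sum>u\<in>outcomes \<Omega> q. (\<lambda>i j. complex_of_real (\<kappa> v u) * \<I> w (seq_obs \<I> u) i j))"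
      by (rule linear_sum[OF lin finite_outcomes[OF fin] bnd])
    also have "\<dots> = (\<Sum>w'\<in>\<Omega>. if w' = w then (\<Sum>u\<in>outcomes \<Omega> q. (\<lambda>i j. complex_of_real (\<kappa> v u) * \<I> w' (seq_obs \<I> u) i j)) else 0)"
      using av fin by simp
    also have "\<dots> = (\<Sum>w'\<in>\<Omega>. \<Sum>u\<in>outcomes \<Omega> q. (\<lambda>i j. complex_of_real (\<kappa>' a (w' # u)) * seq_obs \<I> (w' # u) i j))"
    proof (rule sum.cong[OF refl])
      fix w' assume "w' \<in> \<Omega>"
      show "(if w' = w then (\<Sum>u\<in>outcomes \<Omega> q. (\<lambda>i j. complex_of_real (\<kappa> v u) * \<I> w' (seq_obs \<I> u) i j)) else 0)
          = (\<Sum>u\<in>outcomes \<Omega> q. (\<lambda>i j. complex_of_real (\<kappa>' a (w' # u)) * seq_obs \<I> (w' # u) i j))"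
      proof (cases "w' = w")
        case True
        then show ?thesis by (simp add: \<kappa>'_def av seq_obs_Cons)
      next
        case False
        then have "\<kappa>' a (w' # u) = 0" for u by (simp add: \<kappa>'_def av)
        then have "(\<lambda>i j. complex_of_real (\<kappa>' a (w' # u)) * seq_obs \<I> (w' # u) i j) = 0" for u
          by (simp add: zero_fun_def)
        then show ?thesis using False by simp
      qed
    qed
    also have "\<dots> = (\<Sum>b\<in>outcomes \<Omega> (Suc q). (\<lambda>i j. complex_of_real (\<kappa>' a b) * seq_obs \<I> b i j))"
      by (rule sum_outcomes_Suc[OF fin, symmetric])
    finally show "seq_obs \<I> a = (\<Sum>b\<in>outcomes \<Omega> (Suc q). (\<lambda>i j. complex_of_real (\<kappa>' a b) * seq_obs \<I> b i j))" .
  qed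
qed

lemma post_refl:
  assumes "finite A"
  shows "post_proc A (f :: 'a \<Rightarrow> 'i bop) A f"
  unfolding post_proc_def
proof (intro exI[of _ "\<lambda>a b. if a = b then 1 else 0"] conjI ballI)
  fix a assume a: "a \<in> A"
  show "f a = (\<Sum>b\<in>A. (\<lambda>i j. complex_of_real (if a = b then 1 else 0) * f b i j))"
  proof -
    have "(\<Sum>b\<in>A. (\<lambda>i j. complex_of_real (if a = b then 1 else 0) * f b i j)) = (\<Sum>b\<in>A. if a = b then f b else 0)"
      by (rule sum.cong) (auto simp: zero_fun_def)
    then show ?thesis using a assms by simp
  qed
qed (use assms in auto)

lemma post_trans:
  assumes "finite A" "finite B" "finite C"
    and "post_proc A (f :: 'a \<Rightarrow> 'i bop) B g" "post_proc B g C h"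
  shows "post_proc A f C h"
proof -
  obtain \<kappa> where k1: "\<forall>a\<in>A. \<forall>b\<in>B. 0 \<le> \<kappa> a b \<and> \<kappa> a b \<le> 1"
    and k2: "\<forall>b\<in>B. (\<Sum>a\<in>A. \<kappa> a b) = 1"
    and k3: "\<forall>a\<in>A. f a = (\<Sum>b\<in>B. (\<lambda>i j. complex_of_real (\<kappa> a b) * g b i j))"
    using assms(4) unfolding post_proc_def by blast
  obtain \<rho> where l1: "\<forall>b\<in>B. \<forall>c\<in>C. 0 \<le> \<rho> b c \<and> \<rho> b c \<le> 1"
    and l2: "\<forall>c\<in>C. (\<Sum>b\<in>B. \<rho> b c) = 1"
    and l3: "\<forall>b\<in>B. g b = (\<Sum>c\<in>C. (\<lambda>i j. complex_of_real (\<rho> b c) * h c i j))"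
    using assms(5) unfolding post_proc_def by blast
  show ?thesis unfolding post_proc_def
  proof (intro exI[of _ "\<lambda>a c. \<Sum>b\<in>B. \<kappa> a b * \<rho> b c"] conjI ballI)
    fix a c assume a: "a \<in> A" and c: "c \<in> C"
    show "0 \<le> (\<Sum>b\<in>B. \<kappa> a b * \<rho> b c)" using k1 l1 a c by (auto intro!: sum_nonneg)
    have "(\<Sum>b\<in>B. \<kappa> a b * \<rho> b c) \<le> (\<Sum>b\<in>B. \<rho> b c)"
      using k1 l1 a c by (auto intro!: sum_mono mult_left_le_one_le)
    then show "(\<Sum>b\<in>B. \<kappa> a b * \<rho> b c) \<le> 1" using l2 c by simp
  next
    fix c assume c: "c \<in> C"
    have "(\<Sum>a\<in>A. \<Sum>b\<in>B. \<kappa> a b * \<rho> b c) = (\<Sum>b\<in>B. (\<Sum>a\<in>A. \<kappa> a b) * \<rho> b c)"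
      by (subst sum.swap) (simp add: sum_distrib_right)
    also have "\<dots> = (\<Sum>b\<in>B. \<rho> b c)" using k2 by simp
    finally show "(\<Sum>a\<in>A. \<Sum>b\<in>B. \<kappa> a b * \<rho> b c) = 1" using l2 c by simp
  next
    fix a assume a: "a \<in> A"
    show "f a = (\<Sum>c\<in>C. (\<lambda>i j. complex_of_real (\<Sum>b\<in>B. \<kappa> a b * \<rho> b c) * h c i j))"
    proof (intro ext)
      fix i j
      have "f a i j = (\<Sum>b\<in>B. complex_of_real (\<kappa> a b) * g b i j)"
        using k3 a by (simp add: sum_apply2)
      also have "\<dots> = (\<Sum>b\<in>B. complex_of_real (\<kappa> a b) * (\<Sum>c\<in>C. complex_of_real (\<rho> b c) * h c i j))"
        using l3 by (simp add: sum_apply2)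
      also have "\<dots> = (\<Sum>c\<in>C. complex_of_real (\<Sum>b\<in>B. \<kappa> a b * \<rho> b c) * h c i j)"
        by (simp add: sum_distrib_left sum_distrib_right of_real_sum mult.assoc) (rule sum.swap)
      finally show "f a i j = (\<Sum>c\<in>C. (\<lambda>i j. complex_of_real (\<Sum>b\<in>B. \<kappa> a b * \<rho> b c) * h c i j)) i j"
        by (simp add: sum_apply2)
    qed
  qed
qed

theorem proposition1:
  fixes \<Omega> :: "'w set" and \<I> :: "'w \<Rightarrow> ('i::countable) bop \<Rightarrow> 'i bop" and n :: nat
  assumes "instrument \<Omega> \<I>"
    and "n \<ge> 1"
    and "obs_equiv (outcomes \<Omega> n) (seq_obs \<I>) (outcomes \<Omega> (Suc n)) (seq_obs \<I>)"
  shows "\<forall>m\<ge>n. obs_equiv (outcomes \<Omega> n) (seq_obs \<I>) (outcomes \<Omega> m) (seq_obs \<I>)"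
proof -
  have fin: "finite \<Omega>" using assms(1) instrument_def by auto
  have step: "obs_equiv (outcomes \<Omega> (n + k)) (seq_obs \<I>) (outcomes \<Omega> (Suc (n + k))) (seq_obs \<I>)" for k
  proof (induction k)
    case 0 then show ?case using assms(3) by simp
  next
    case (Suc k) then show ?case
      unfolding obs_equiv_def using post_shift[OF assms(1)] by simp
  qed
  have main: "obs_equiv (outcomes \<Omega> n) (seq_obs \<I>) (outcomes \<Omega> (n + k)) (seq_obs \<I>)" for k
  proof (induction k)
    case 0 then show ?case unfolding obs_equiv_def by (simp add: post_refl finite_outcomes[OF fin])
  next
    case (Suc k) then show ?case
      using step[of k] post_trans finite_outcomes[OF fin] unfolding obs_equiv_def
      by (metis add_Suc_right)
  qed
  show ?thesis
  proof (intro allI impI)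
    fix m assume "m \<ge> n"
    then obtain k where "m = n + k" using le_Suc_ex by blast
    then show "obs_equiv (outcomes \<Omega> n) (seq_obs \<I>) (outcomes \<Omega> m) (seq_obs \<I>)" using main by simp
  qed
qed

end
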